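(* Let $\alpha \in (0, \tfrac{1}{2}\pi)$ and put $\kappa = \sin \alpha$. Then $$\tfrac{1}{2} \pi \,_2F_1 (\tfrac{1}{3}, \tfrac{2}{3}; 1; \kappa^2) = \sqrt2 \int_0^{\alpha} \frac{\cos \frac{1}{3} \psi}{\sqrt{\cos 2 \psi - \cos 2 \alpha}}\, {\rm d} \psi.$$
   Context: $\,_2F_1$ denotes the Gauss hypergeometric function. *)

theory Defs
  imports "HOL-Analysis.Analysis"
begin

text \<open>Gauss hypergeometric function, defined by its power series
  (convergent for |z| < 1, which is the only range used).\<close>
definition hyp2F1 :: "real \<Rightarrow> real \<Rightarrow> real \<Rightarrow> real \<Rightarrow> real" where
  "hyp2F1 a b c z =
     (\<Sum>n. pochhammer a n * pochhammer b n / (pochhammer c n * fact n) * z ^ n)"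

end

theory Submission
  imports Defs
begin

definition bc :: "nat \<Rightarrow> real" where
  "bc n = pochhammer (1/3) n * pochhammer (2/3) n / (pochhammer (1/2) n * fact n)"

lemma bc_Suc: "bc (Suc n) = bc n * ((1/3 + n) * (2/3 + n) / ((1/2 + n) * (n + 1)))"
proof -
  have "pochhammer (1/2::real) n > 0" by (intro pochhammer_pos) auto
  then show ?thesis unfolding bc_def pochhammer_Suc fact_Suc
    by (simp add: field_simps)
qed

lemma bc_pos: "bc n > 0"
  unfolding bc_def by (intro divide_pos_pos mult_pos_pos pochhammer_pos) auto

lemma bc_le1: "bc n \<le> 1"
proof (induction n)
  case 0 then show ?case by (simp add: bc_def)
next
  case (Suc n)
  have r: "(1/3 + real n) * (2/3 + real n) / ((1/2 + real n) * (real n + 1)) \<le> 1"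
  proof -
    have "(1/3 + real n) * (2/3 + real n) \<le> (1/2 + real n) * (real n + 1)" by (simp add: algebra_simps)
    moreover have "(1/2 + real n) * (real n + 1) > 0" by simp
    ultimately show ?thesis by simp
  qed
  have "bc (Suc n) \<le> bc n * 1" unfolding bc_Suc
    by (rule mult_left_mono[OF r]) (use bc_pos[of n] in auto)
  with Suc show ?case by simp
qed

lemma bc_rec: "2 * (real n + 1) * (2 * real n + 1) * bc (Suc n) = (4 * (real n)^2 + 4 * real n + 8/9) * bc n"
proof -
  define q where "q = (1/2 + real n) * (real n + 1)"
  have q: "q > 0" unfolding q_def by simp
  have e: "2 * (real n + 1) * (2 * real n + 1) = 4 * q" unfolding q_def by (simp add: algebra_simps)
  have "2 * (real n + 1) * (2 * real n + 1) * bc (Suc n) = 4 * ((1/3 + n) * (2/3 + n)) * bc n"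
    unfolding bc_Suc e using q by (simp add: q_def[symmetric])
  also have "\<dots> = (4 * (real n)^2 + 4 * real n + 8/9) * bc n" by (simp add: algebra_simps power2_eq_square)
  finally show ?thesis .
qed

definition TT :: "real fps" where "TT = Abs_fps bc"

lemma TT_rad: "fps_conv_radius TT \<ge> 1"
  unfolding fps_conv_radius_def TT_def fps_nth_Abs_fps
proof (rule conv_radius_geI_ex')
  fix r :: real assume r: "0 < r" "ereal r < 1"
  then have r1: "r < 1" by simp
  show "summable (\<lambda>n. bc n * of_real r ^ n)"
  proof (rule summable_comparison_test')
    show "summable (\<lambda>n. r ^ n)" using r r1 by (intro summable_geometric) auto
    fix n show "norm (bc n * of_real r ^ n) \<le> r ^ n"
      using bc_pos[of n] bc_le1[of n] r
      by (auto simp: abs_mult intro!: mult_left_le_one_le)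
  qed
qed

lemma TT_ode:
  "fps_const 4 * (fps_X * fps_deriv (fps_deriv TT)) - fps_const 4 * (fps_X^2 * fps_deriv (fps_deriv TT))
   + fps_const 2 * fps_deriv TT - fps_const 8 * (fps_X * fps_deriv TT) - fps_const (8/9) * TT = 0"
proof (rule fps_ext)
  fix n
  show "fps_nth (fps_const 4 * (fps_X * fps_deriv (fps_deriv TT)) - fps_const 4 * (fps_X^2 * fps_deriv (fps_deriv TT))
   + fps_const 2 * fps_deriv TT - fps_const 8 * (fps_X * fps_deriv TT) - fps_const (8/9) * TT) n = fps_nth (0::real fps) n"
  proof (cases n)
    case 0 then show ?thesis using bc_rec[of 0] by (simp add: TT_def fps_X_power_mult_nth)
  next
    case (Suc m)
    then show ?thesis using bc_rec[of n]
      by (simp add: TT_def fps_X_power_mult_nth power2_eq_square algebra_simps)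
  qed
qed

lemma rad_mult: "1 \<le> fps_conv_radius f \<Longrightarrow> 1 \<le> fps_conv_radius g \<Longrightarrow> 1 \<le> fps_conv_radius (f * (g :: real fps))"
  using fps_conv_radius_mult[of f g] by (simp add: min_def split: if_splits)
lemma rad_add: "1 \<le> fps_conv_radius f \<Longrightarrow> 1 \<le> fps_conv_radius g \<Longrightarrow> 1 \<le> fps_conv_radius (f + (g :: real fps))"
  using fps_conv_radius_add[of f g] by (simp add: min_def split: if_splits)
lemma rad_diff: "1 \<le> fps_conv_radius f \<Longrightarrow> 1 \<le> fps_conv_radius g \<Longrightarrow> 1 \<le> fps_conv_radius (f - (g :: real fps))"
  using fps_conv_radius_diff[of f g] by (simp add: min_def split: if_splits)
lemma radI: "norm (y::real) < 1 \<Longrightarrow> 1 \<le> fps_conv_radius f \<Longrightarrow> ereal (norm y) < fps_conv_radius f"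
  by (metis ereal_less(3) order_less_le_trans)
lemma radI': "\<bar>y::real\<bar> < 1 \<Longrightarrow> 1 \<le> fps_conv_radius f \<Longrightarrow> ereal \<bar>y\<bar> < fps_conv_radius f"
  using radI by simp
lemma rad_D1: "1 \<le> fps_conv_radius (fps_deriv TT)"
  using TT_rad fps_conv_radius_deriv[of TT] by order
lemma rad_D2: "1 \<le> fps_conv_radius (fps_deriv (fps_deriv TT))"
  using rad_D1 fps_conv_radius_deriv[of "fps_deriv TT"] by order
lemma rad_const: "1 \<le> fps_conv_radius (fps_const (c::real))" by simp
lemma rad_X: "1 \<le> fps_conv_radius (fps_X :: real fps)" by simp
lemma rad_X2: "1 \<le> fps_conv_radius (fps_X^2 :: real fps)" by simp

definition T0 where "T0 = eval_fps TT"
definition T1 where "T1 = eval_fps (fps_deriv TT)"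
definition T2 where "T2 = eval_fps (fps_deriv (fps_deriv TT))"

lemma T_ode_eval:
  assumes "\<bar>y::real\<bar> < 1"
  shows "4 * (y * T2 y) - 4 * (y^2 * T2 y) + 2 * T1 y - 8 * (y * T1 y) - 8/9 * T0 y = 0"
proof -
  have n: "norm y < 1" using assms by simp
  note R = rad_mult rad_add rad_diff rad_D1 rad_D2 TT_rad rad_const rad_X rad_X2
  have "eval_fps (fps_const 4 * (fps_X * fps_deriv (fps_deriv TT)) - fps_const 4 * (fps_X^2 * fps_deriv (fps_deriv TT))
   + fps_const 2 * fps_deriv TT - fps_const 8 * (fps_X * fps_deriv TT) - fps_const (8/9) * TT) y = 0"
    by (simp add: TT_ode)
  then show ?thesis unfolding T0_def T1_def T2_def
    by (simp add: eval_fps_add eval_fps_diff eval_fps_mult radI[OF n] radI'[OF assms] R del: fps_const_mult_left)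
qed

lemma T0_deriv: "\<bar>y\<bar> < 1 \<Longrightarrow> (T0 has_real_derivative T1 y) (at y)"
  unfolding T0_def T1_def by (rule has_field_derivative_eval_fps) (intro radI TT_rad, simp)
lemma T1_deriv: "\<bar>y\<bar> < 1 \<Longrightarrow> (T1 has_real_derivative T2 y) (at y)"
  unfolding T2_def T1_def by (rule has_field_derivative_eval_fps) (intro radI rad_D1, simp)

lemma T0_chain: "(g has_real_derivative g') (at x) \<Longrightarrow> \<bar>g x\<bar> < 1 \<Longrightarrow>
   ((\<lambda>x. T0 (g x)) has_real_derivative T1 (g x) * g') (at x)"
  using DERIV_chain2[OF T0_deriv] by blast
lemma T1_chain: "(g has_real_derivative g') (at x) \<Longrightarrow> \<bar>g x\<bar> < 1 \<Longrightarrow>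
   ((\<lambda>x. T1 (g x)) has_real_derivative T2 (g x) * g') (at x)"
  using DERIV_chain2[OF T1_deriv] by blast

lemma T0_0: "T0 0 = 1"
  by (simp add: T0_def eval_fps_at_0 TT_def bc_def)

lemma T0_chain': "(g has_real_derivative g') (at x) \<Longrightarrow> \<bar>g x\<bar> < 1 \<Longrightarrow> D = T1 (g x) * g' \<Longrightarrow>
   ((\<lambda>x. T0 (g x)) has_real_derivative D) (at x)"
  using T0_chain by blast
lemma T1_chain': "(g has_real_derivative g') (at x) \<Longrightarrow> \<bar>g x\<bar> < 1 \<Longrightarrow> D = T2 (g x) * g' \<Longrightarrow>
   ((\<lambda>x. T1 (g x)) has_real_derivative D) (at x)"
  using T1_chain by blast

lemma sin2_lt: "-(pi/2) < x \<Longrightarrow> x < pi/2 \<Longrightarrow> \<bar>sin x ^ 2\<bar> < 1"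
proof -
  assume "-(pi/2) < x" "x < pi/2"
  then have "cos x > 0" by (intro cos_gt_zero_pi) auto
  then have "cos x ^ 2 > 0" by simp
  moreover have "cos x ^ 2 \<le> 1" using abs_cos_le_one[of x] by (simp add: abs_square_le_1)
  ultimately show ?thesis by (simp add: sin_squared_eq)
qed

lemma alg1: "(c::real)^2 = 1 - s^2 \<Longrightarrow>
  4 * (s^2 * C) - 4 * ((s^2)^2 * C) + 2 * B - 8 * (s^2 * B) - 8/9 * A = 0 \<Longrightarrow>
  (2 * c * c^2 + 2 * s * (2 * c * (- s))) * B + 2 * s * c^2 * (C * (2 * s * c)) - (c * A + s * (B * (2 * s * c)))
  = -(1/9) * (A * c)"
  by algebra

lemma U_V:
  fixes x :: real
  assumes "-(pi/2) < x" "x < pi/2"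
  shows "((\<lambda>x. T0 (sin x ^2) * cos x) has_real_derivative (2 * sin x * cos x ^2 * T1 (sin x ^2) - sin x * T0 (sin x ^2))) (at x)"
    and "((\<lambda>x. 2 * sin x * cos x ^2 * T1 (sin x ^2) - sin x * T0 (sin x ^2)) has_real_derivative (-(1/9) * (T0 (sin x ^2) * cos x))) (at x)"
proof -
  have y: "\<bar>sin x ^ 2\<bar> < 1" using sin2_lt[OF assms] .
  have ode: "4 * (sin x ^2 * T2 (sin x ^2)) - 4 * ((sin x ^2)^2 * T2 (sin x ^2)) + 2 * T1 (sin x ^2)
     - 8 * (sin x ^2 * T1 (sin x ^2)) - 8/9 * T0 (sin x ^2) = 0"
    by (rule T_ode_eval[OF y])
  have csq: "cos x ^ 2 = 1 - sin x ^ 2" by (simp add: cos_squared_eq)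
  show "((\<lambda>x. T0 (sin x ^2) * cos x) has_real_derivative (2 * sin x * cos x ^2 * T1 (sin x ^2) - sin x * T0 (sin x ^2))) (at x)"
    using y
    apply -
    apply (rule derivative_eq_intros T0_chain' T1_chain' refl | assumption)+
    apply (simp add: power2_eq_square algebra_simps)
    done
  show "((\<lambda>x. 2 * sin x * cos x ^2 * T1 (sin x ^2) - sin x * T0 (sin x ^2)) has_real_derivative (-(1/9) * (T0 (sin x ^2) * cos x))) (at x)"
    using y
    apply -
    apply (rule derivative_eq_intros T0_chain' T1_chain' refl | assumption)+
    using ode csq apply (simp add: power2_eq_square)
    apply algebra
    done
qed

lemma u_eq:
  fixes \<phi> :: real
  assumes "0 \<le> \<phi>" "\<phi> < pi/2"
  shows "T0 (sin \<phi> ^ 2) * cos \<phi> = cos (\<phi> / 3)"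
proof -
  define U where "U = (\<lambda>x::real. T0 (sin x ^2) * cos x)"
  define V where "V = (\<lambda>x::real. 2 * sin x * cos x ^2 * T1 (sin x ^2) - sin x * T0 (sin x ^2))"
  have dU: "(U has_real_derivative D) (at x)" if "-(pi/2) < x" "x < pi/2" "D = V x" for x D
    using U_V(1)[OF that(1,2)] that(3) unfolding U_def V_def by simp
  have dV: "(V has_real_derivative D) (at x)" if "-(pi/2) < x" "x < pi/2" "D = -(1/9) * U x" for x D
    using U_V(2)[OF that(1,2)] that(3) unfolding U_def V_def by simp
  define E where "E = (\<lambda>x. (3 * V x + sin (x/3))^2 + (U x - cos (x/3))^2)"
  have dE: "(E has_real_derivative 0) (at x)" if "-(pi/2) < x" "x < pi/2" for x
    unfolding E_def
    apply (auto intro!: derivative_eq_intros dU dV that)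
    apply (simp add: algebra_simps power2_eq_square)
    apply (simp add: field_simps)
    done
  have E0: "E 0 = 0" unfolding E_def U_def V_def by (simp add: T0_0)
  have "E \<phi> = 0"
  proof (cases "\<phi> = 0")
    case True then show ?thesis using E0 by simp
  next
    case False
    then have "0 < \<phi>" using assms by simp
    have "E \<phi> = E 0"
    proof (rule DERIV_isconst2[OF \<open>0 < \<phi>\<close>])
      show "continuous_on {0..\<phi>} E"
        using assms by (intro continuous_at_imp_continuous_on ballI DERIV_isCont[OF dE]) auto
      fix x assume "0 < x" "x < \<phi>"
      then show "DERIV E x :> 0" using assms by (intro dE) auto
    qed (use assms in auto)
    then show ?thesis using E0 by simp
  qed
  then have "U \<phi> - cos (\<phi>/3) = 0" unfolding E_def
    by (simp add: sum_power2_eq_zero_iff)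
  then show ?thesis unfolding U_def by simp
qed

lemma wallis:
  "((\<lambda>t. sin t ^ (2*n)) has_integral (pi/2 * pochhammer (1/2) n / fact n)) {0..pi/2}"
proof (induction n)
  case 0
  show ?case using has_integral_const_real[of "1::real" 0 "pi/2"] by simp
next
  case (Suc n)
  define F where "F = (\<lambda>t::real. sin t ^ (2*n+1) * cos t)"
  have A: "((\<lambda>t. (2*real n+1) * sin t ^ (2*n) - (2*real n+2) * sin t ^ (2*Suc n)) has_integral (F (pi/2) - F 0)) {0..pi/2}"
  proof (rule fundamental_theorem_of_calculus)
    fix x :: real
    have "(F has_real_derivative ((2*real n+1) * sin x ^ (2*n) - (2*real n+2) * sin x ^ (2*Suc n))) (at x)"
    proof -
      have "(F has_real_derivative (real (2*n+1) * sin x ^ (2*n) * cos x * cos x + sin x ^ (2*n+1) * (- sin x))) (at x)"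
      proof -
        have d1: "((\<lambda>t. sin t ^ (2*n+1)) has_real_derivative real (2*n+1) * sin x ^ (2*n) * cos x) (at x)"
          using DERIV_chain2[OF DERIV_pow[of "2*n+1" "sin x"] DERIV_sin[of x]] by simp
        show ?thesis unfolding F_def using DERIV_mult[OF d1 DERIV_cos[of x]] by (simp add: mult_ac)
      qed
      moreover have "real (2*n+1) * sin x ^ (2*n) * cos x * cos x + sin x ^ (2*n+1) * (- sin x)
          = (2*real n+1) * sin x ^ (2*n) - (2*real n+2) * sin x ^ (2*Suc n)"
      proof -
        have cc: "cos x * cos x = 1 - sin x * sin x" using cos_squared_eq[of x] by (simp add: power2_eq_square)
        have p1: "sin x ^ (2*n+1) = sin x ^ (2*n) * sin x" by simp
        have p2: "sin x ^ (2*Suc n) = sin x ^ (2*n) * (sin x * sin x)" by (simp add: power_add)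
        have r: "real (2*n+1) = 2*real n+1" by simp
        show ?thesis unfolding p1 p2 r mult.assoc cc by (simp only: algebra_simps)
      qed
      ultimately show ?thesis by simp
    qed
    then show "(F has_vector_derivative ((2*real n+1) * sin x ^ (2*n) - (2*real n+2) * sin x ^ (2*Suc n))) (at x within {0..pi/2})"
      by (simp add: has_real_derivative_iff_has_vector_derivative[symmetric] has_field_derivative_at_within)
  qed simp
  have F0: "F (pi/2) - F 0 = 0" unfolding F_def by simp
  have B: "((\<lambda>t. (2*real n+1) * sin t ^ (2*n)) has_integral (2*real n+1) * (pi/2 * pochhammer (1/2) n / fact n)) {0..pi/2}"
    by (rule has_integral_mult_right[OF Suc.IH])
  have C: "((\<lambda>t. (2*real n+2) * sin t ^ (2*Suc n)) has_integral (2*real n+1) * (pi/2 * pochhammer (1/2) n / fact n)) {0..pi/2}"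
    using has_integral_diff[OF B A] unfolding F0 by simp
  have D: "((\<lambda>t. (1/(2*real n+2)) * ((2*real n+2) * sin t ^ (2*Suc n))) has_integral
      (1/(2*real n+2)) * ((2*real n+1) * (pi/2 * pochhammer (1/2) n / fact n))) {0..pi/2}"
    by (rule has_integral_mult_right[OF C])
  have e: "(1/(2*real n+2)) * ((2*real n+1) * (pi/2 * pochhammer (1/2) n / fact n)) = pi/2 * pochhammer (1/2) (Suc n) / fact (Suc n)"
    unfolding pochhammer_Suc fact_Suc by (simp add: field_simps)
  show ?case using D unfolding e by simp
qed

lemma term_integral:
  "((\<lambda>t. bc n * (k2 * sin t ^ 2) ^ n) has_integral
     pi/2 * (pochhammer (1/3) n * pochhammer (2/3) n / (pochhammer 1 n * fact n) * k2 ^ n)) {0..pi/2}"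
proof -
  have "((\<lambda>t. (bc n * k2 ^ n) * sin t ^ (2*n)) has_integral (bc n * k2 ^ n) * (pi/2 * pochhammer (1/2) n / fact n)) {0..pi/2}"
    by (rule has_integral_mult_right[OF wallis])
  moreover have "(\<lambda>t. (bc n * k2 ^ n) * sin t ^ (2*n)) = (\<lambda>t. bc n * (k2 * sin t ^ 2) ^ n)"
    by (simp add: power_mult_distrib power_mult mult.assoc)
  moreover have "(bc n * k2 ^ n) * (pi/2 * pochhammer (1/2) n / fact n) =
     pi/2 * (pochhammer (1/3) n * pochhammer (2/3) n / (pochhammer 1 n * fact n) * k2 ^ n)"
  proof -
    have "pochhammer (1/2::real) n > 0" by (intro pochhammer_pos) auto
    then show ?thesis unfolding bc_def pochhammer_fact[symmetric] by (simp add: field_simps)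
  qed
  ultimately show ?thesis by simp
qed

lemma integral_T0:
  fixes k2 :: real
  assumes "0 \<le> k2" "k2 < 1"
  shows "((\<lambda>t. T0 (k2 * sin t ^ 2)) has_integral (pi/2 * hyp2F1 (1/3) (2/3) 1 k2)) {0..pi/2}"
proof -
  define f where "f = (\<lambda>k t. \<Sum>n<k. bc n * (k2 * sin t ^ 2) ^ n)"
  define a where "a = (\<lambda>n. pochhammer (1/3) n * pochhammer (2/3) n / (pochhammer 1 n * fact n) * k2 ^ n)"
  have fi: "(f k has_integral (\<Sum>n<k. pi/2 * a n)) {0..pi/2}" for k
    unfolding f_def a_def by (intro has_integral_sum term_integral) auto
  have yl: "\<bar>k2 * sin t ^ 2\<bar> < 1" for t
  proof -
    have "sin t ^ 2 \<le> 1" using abs_sin_le_one[of t] by (simp add: abs_square_le_1)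
    then have "k2 * sin t ^ 2 \<le> k2" using assms by (simp add: mult_left_le)
    then show ?thesis using assms by simp
  qed
  have mc: "(\<lambda>t. T0 (k2 * sin t ^ 2)) integrable_on {0..pi/2} \<and>
      ((\<lambda>k. integral {0..pi/2} (f k)) \<longlongrightarrow> integral {0..pi/2} (\<lambda>t. T0 (k2 * sin t ^ 2))) sequentially"
  proof (rule monotone_convergence_increasing)
    show "f k integrable_on {0..pi/2}" for k using fi by blast
    show "f k x \<le> f (Suc k) x" for k x
      unfolding f_def using bc_pos[of k] assms by simp
    show "((\<lambda>k. f k x) \<longlongrightarrow> T0 (k2 * sin x ^ 2)) sequentially" for x
    proof -
      have "(\<lambda>n. fps_nth TT n * (k2 * sin x ^ 2) ^ n) sums eval_fps TT (k2 * sin x ^ 2)"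
        by (rule sums_eval_fps) (intro radI TT_rad, use yl in simp)
      then show ?thesis unfolding f_def T0_def sums_def TT_def by simp
    qed
    have "norm (integral {0..pi/2} (f k)) \<le> pi/2 * (1 / (1 - k2))" for k
    proof -
      have "integral {0..pi/2} (f k) \<le> integral {0..pi/2} (\<lambda>t. 1 / (1 - k2))"
      proof (rule integral_le)
        show "f k integrable_on {0..pi/2}" using fi by blast
        fix t :: real
        have "f k t \<le> (\<Sum>n<k. (k2 * sin t ^ 2) ^ n)"
          unfolding f_def using bc_le1 bc_pos[THEN less_imp_le] assms by (intro sum_mono mult_left_le_one_le) auto
        also have "\<dots> \<le> (\<Sum>n. (k2 * sin t ^ 2) ^ n)"
          using yl[of t] assms by (intro sum_le_suminf summable_geometric) auto
        also have "\<dots> = 1 / (1 - k2 * sin t ^ 2)"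
          using yl[of t] by (intro suminf_geometric) auto
        also have "\<dots> \<le> 1 / (1 - k2)"
        proof -
          have "sin t ^ 2 \<le> 1" using abs_sin_le_one[of t] by (simp add: abs_square_le_1)
          then have "k2 * sin t ^ 2 \<le> k2" using assms by (simp add: mult_left_le)
          then show ?thesis using assms yl[of t] by (intro divide_left_mono) (auto simp: abs_if)
        qed
        finally show "f k t \<le> 1 / (1 - k2)" .
      qed auto
      moreover have "integral {0..pi/2} (f k) \<ge> 0"
        unfolding f_def using bc_pos assms by (intro integral_nonneg sum_nonneg) (auto intro: fi[unfolded f_def, THEN has_integral_integrable] simp: less_imp_le)
      ultimately show ?thesis by simp
    qed
    then show "bounded (range (\<lambda>k. integral {0..pi/2} (f k)))"
      unfolding bounded_iff by blast
  qed
  have "(\<lambda>n. pi/2 * a n) sums integral {0..pi/2} (\<lambda>t. T0 (k2 * sin t ^ 2))"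
  proof -
    have "integral {0..pi/2} (f k) = (\<Sum>n<k. pi/2 * a n)" for k using fi[of k] by (rule integral_unique)
    then show ?thesis using mc unfolding sums_def by presburger
  qed
  then have "(\<lambda>n. a n) sums (integral {0..pi/2} (\<lambda>t. T0 (k2 * sin t ^ 2)) / (pi/2))"
    using sums_divide[of "\<lambda>n. pi/2 * a n" _ "pi/2"] by simp
  then have "hyp2F1 (1/3) (2/3) 1 k2 = integral {0..pi/2} (\<lambda>t. T0 (k2 * sin t ^ 2)) / (pi/2)"
    unfolding hyp2F1_def a_def by (rule sums_unique[symmetric])
  then have "integral {0..pi/2} (\<lambda>t. T0 (k2 * sin t ^ 2)) = pi/2 * hyp2F1 (1/3) (2/3) 1 k2"
    by simp
  moreover have "((\<lambda>t. T0 (k2 * sin t ^ 2)) has_integral integral {0..pi/2} (\<lambda>t. T0 (k2 * sin t ^ 2))) {0..pi/2}"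
    using conjunct1[OF mc] by (rule integrable_integral)
  ultimately show ?thesis by (simp only:)
qed

theorem theorem3:
  fixes \<alpha> \<kappa> :: real
  assumes "0 < \<alpha>" and "\<alpha> < pi / 2"
    and "\<kappa> = sin \<alpha>"
  shows "pi / 2 * hyp2F1 (1/3) (2/3) 1 (\<kappa>^2) =
    sqrt 2 * integral {0..\<alpha>} (\<lambda>\<psi>. cos (\<psi> / 3) / sqrt (cos (2 * \<psi>) - cos (2 * \<alpha>)))"
proof -
  have kpos: "\<kappa> > 0" using assms by (simp add: sin_gt_zero)
  have klt: "\<kappa> < 1"
  proof -
    have "sin \<alpha> < sin (pi/2)" using assms by (intro sin_monotone_2pi) auto
    then show ?thesis using assms by simp
  qed
  define k where "k = (\<lambda>t. T0 (\<kappa>^2 * sin t ^ 2))"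
  have yl: "\<bar>\<kappa>^2 * sin t ^ 2\<bar> < 1" for t
  proof -
    have "sin t ^ 2 \<le> 1" using abs_sin_le_one[of t] by (simp add: abs_square_le_1)
    then have "\<kappa>^2 * sin t ^ 2 \<le> \<kappa>^2" by (simp add: mult_left_le)
    moreover have "\<kappa>^2 < 1" using kpos klt by (simp add: power_less_one_iff)
    ultimately show ?thesis by simp
  qed
  have kcont: "isCont k t" for t
  proof -
    have "isCont T0 (\<kappa>^2 * sin t ^ 2)" unfolding T0_def
      by (rule continuous_eval_fps) (intro radI TT_rad, use yl in simp)
    moreover have "isCont (\<lambda>t. \<kappa>^2 * sin t ^ 2) t" by (intro continuous_intros)
    ultimately show ?thesis unfolding k_def using isCont_o2[where g = T0 and f = "\<lambda>t. \<kappa>^2 * sin t ^ 2"] by blast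
  qed
  have kcont_on: "continuous_on A k" for A using kcont by (simp add: continuous_at_imp_continuous_on)
  define H where "H = (\<lambda>s. integral {0..s} k)"
  have Hd: "(H has_real_derivative k s) (at s within {0..pi/2})" if "s \<in> {0..pi/2}" for s
    unfolding H_def by (rule integral_has_real_derivative[OF kcont_on that])
  have Hcont: "continuous_on {0..pi/2} H" by (rule DERIV_continuous_on[OF Hd])
  define \<theta> where "\<theta> = (\<lambda>\<psi>. arcsin (sin \<psi> / \<kappa>))"
  have srange: "0 \<le> sin \<psi> / \<kappa> \<and> sin \<psi> / \<kappa> \<le> 1" if "\<psi> \<in> {0..\<alpha>}" for \<psi>
  proof -
    have "0 \<le> sin \<psi>" using that assms by (intro sin_ge_zero) auto
    moreover have "sin \<psi> \<le> sin \<alpha>" using that assms by (intro sin_monotone_2pi_le) auto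
    ultimately show ?thesis using kpos assms by auto
  qed
  have thcont: "continuous_on {0..\<alpha>} \<theta>" unfolding \<theta>_def
  proof (intro continuous_intros)
    show "\<forall>x\<in>{0..\<alpha>}. - 1 \<le> sin x / \<kappa> \<and> sin x / \<kappa> \<le> 1"
      using srange by (meson dual_order.trans neg_le_0_iff_le zero_le_one)
  qed (use kpos in auto)
  have thrange: "\<theta> ` {0..\<alpha>} \<subseteq> {0..pi/2}"
  proof
    fix y assume "y \<in> \<theta> ` {0..\<alpha>}"
    then obtain \<psi> where p: "\<psi> \<in> {0..\<alpha>}" "y = \<theta> \<psi>" by auto
    have "arcsin 0 \<le> arcsin (sin \<psi> / \<kappa>)" using srange[OF p(1)] by (intro arcsin_le_arcsin) auto
    moreover have "arcsin (sin \<psi> / \<kappa>) \<le> pi/2" using srange[OF p(1)] by (intro arcsin_ubound) auto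
    ultimately show "y \<in> {0..pi/2}" using p unfolding \<theta>_def by simp
  qed
  define G where "G = (\<lambda>\<psi>. H (\<theta> \<psi>))"
  have Gcont: "continuous_on {0..\<alpha>} G" unfolding G_def
    by (rule continuous_on_compose2[OF Hcont thcont thrange])
  define f where "f = (\<lambda>\<psi>. sqrt 2 * (cos (\<psi> / 3) / sqrt (cos (2 * \<psi>) - cos (2 * \<alpha>))))"
  have Gd: "(G has_vector_derivative f \<psi>) (at \<psi>)" if "\<psi> \<in> {0<..<\<alpha>}" for \<psi>
  proof -
    define u where "u = sin \<psi> / \<kappa>"
    have sp: "0 < sin \<psi>" using that assms by (intro sin_gt_zero) auto
    have sl: "sin \<psi> < sin \<alpha>" using that assms by (intro sin_monotone_2pi) auto
    have u0: "0 < u" "u < 1" using sp sl kpos assms unfolding u_def by auto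
    have th: "\<theta> \<psi> \<in> {0<..<pi/2}"
    proof -
      have "arcsin 0 < arcsin u" using u0 by (intro arcsin_less_arcsin) auto
      moreover have "arcsin u < pi/2" using arcsin_lt_bounded[of u] u0 by auto
      ultimately show ?thesis unfolding \<theta>_def u_def[symmetric] by simp
    qed
    have Hd': "(H has_real_derivative k (\<theta> \<psi>)) (at (\<theta> \<psi>))"
      using Hd[of "\<theta> \<psi>"] th at_within_interior[of "\<theta> \<psi>" "{0..pi/2}"] by auto
    have thd: "(\<theta> has_real_derivative inverse (sqrt (1 - u^2)) * (cos \<psi> / \<kappa>)) (at \<psi>)"
    proof -
      have a1: "- 1 < sin \<psi> / \<kappa>" "sin \<psi> / \<kappa> < 1" using u0 unfolding u_def by auto
      show ?thesis
        unfolding \<theta>_def u_def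
        using DERIV_chain2[OF DERIV_arcsin[OF a1] DERIV_cdivide[OF DERIV_sin[of \<psi>], of \<kappa>]]
        by simp
    qed
    have Gd: "(G has_real_derivative k (\<theta> \<psi>) * (inverse (sqrt (1 - u^2)) * (cos \<psi> / \<kappa>))) (at \<psi>)"
      unfolding G_def by (rule DERIV_chain2[OF Hd' thd])
    have kth: "k (\<theta> \<psi>) = T0 (sin \<psi> ^ 2)"
    proof -
      have "sin (\<theta> \<psi>) = u" unfolding \<theta>_def u_def[symmetric] using u0 by simp
      then show ?thesis unfolding k_def using kpos by (simp add: u_def power_divide)
    qed
    have ue: "T0 (sin \<psi> ^ 2) * cos \<psi> = cos (\<psi> / 3)" using that assms by (intro u_eq) auto
    have sq1: "\<kappa> * sqrt (1 - u^2) = sqrt (\<kappa>^2 - sin \<psi> ^ 2)"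
    proof -
      have "\<kappa> * sqrt (1 - u^2) = sqrt (\<kappa>^2) * sqrt (1 - u^2)" using kpos by simp
      also have "\<dots> = sqrt (\<kappa>^2 * (1 - u^2))" by (simp add: real_sqrt_mult)
      also have "\<kappa>^2 * (1 - u^2) = \<kappa>^2 - sin \<psi> ^ 2" using kpos unfolding u_def by (simp add: field_simps)
      finally show ?thesis .
    qed
    have sq2: "sqrt (cos (2 * \<psi>) - cos (2 * \<alpha>)) = sqrt 2 * sqrt (\<kappa>^2 - sin \<psi> ^ 2)"
    proof -
      have "cos (2 * \<psi>) - cos (2 * \<alpha>) = 2 * (\<kappa>^2 - sin \<psi> ^ 2)"
        unfolding cos_double_sin assms(3) by simp
      then show ?thesis by (simp only: real_sqrt_mult)
    qed
    have pos: "sqrt (\<kappa>^2 - sin \<psi> ^ 2) > 0"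
    proof -
      have "sin \<psi> ^ 2 < \<kappa> ^ 2" using sp sl assms by (intro power_strict_mono) auto
      then show ?thesis by simp
    qed
    have "k (\<theta> \<psi>) * (inverse (sqrt (1 - u^2)) * (cos \<psi> / \<kappa>)) = (T0 (sin \<psi> ^ 2) * cos \<psi>) / (\<kappa> * sqrt (1 - u^2))"
      unfolding kth by (simp add: field_simps)
    also have "\<dots> = f \<psi>" unfolding ue sq1 f_def sq2 using pos by simp
    finally show ?thesis using Gd by (simp add: has_real_derivative_iff_has_vector_derivative[symmetric])
  qed
  have FT: "(f has_integral (G \<alpha> - G 0)) {0..\<alpha>}"
    by (rule fundamental_theorem_of_calculus_interior[OF _ Gcont Gd]) (use assms in auto)
  have GA: "G \<alpha> = pi / 2 * hyp2F1 (1/3) (2/3) 1 (\<kappa>^2)"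
  proof -
    have "G \<alpha> = H (pi/2)" unfolding G_def \<theta>_def using kpos assms by simp
    also have "\<dots> = pi / 2 * hyp2F1 (1/3) (2/3) 1 (\<kappa>^2)"
      unfolding H_def k_def
      by (rule integral_unique, rule integral_T0) (use kpos klt in \<open>auto simp: power_less_one_iff\<close>)
    finally show ?thesis .
  qed
  have G0: "G 0 = 0" unfolding G_def \<theta>_def H_def by simp
  have "((\<lambda>\<psi>. (1 / sqrt 2) * f \<psi>) has_integral (1 / sqrt 2) * (G \<alpha> - G 0)) {0..\<alpha>}"
    by (rule has_integral_mult_right[OF FT])
  moreover have "(\<lambda>\<psi>. (1 / sqrt 2) * f \<psi>) = (\<lambda>\<psi>. cos (\<psi> / 3) / sqrt (cos (2 * \<psi>) - cos (2 * \<alpha>)))"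
    unfolding f_def by auto
  ultimately have "integral {0..\<alpha>} (\<lambda>\<psi>. cos (\<psi> / 3) / sqrt (cos (2 * \<psi>) - cos (2 * \<alpha>))) = (1 / sqrt 2) * (G \<alpha> - G 0)"
    by (simp add: integral_unique)
  then show ?thesis unfolding GA G0 by simp
qed

end
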